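(* Let $k$ divide $n$ with $n/k>1$. Then the positive semidefinite biquadratic form $B_{\Phi^{(n,k)}}$ decomposes as a sum of positive semidefinite biquadratic forms: \[ B_{\Phi^{(n,k)}}=\sum_{d=1}^{k} F_{\sigma_k,d}+\sum_{\substack{1\le i<j\le n \\ i \not\equiv j \pmod{k}}}\left( x_i y_i -x_j y_j \right)^2 , \] where \[ F_{\sigma_k,d}=\left( \frac{n}{k}-2 \right)\sum_{i \equiv d \pmod{k}} x_i^2 y_i^2 -2 \sum_{\substack{1\le i<j\le n \\ i \equiv j\equiv d \pmod{k}}} x_iy_ix_jy_j +\sum_{i \equiv d \pmod{k}} x_{\sigma_k(i)}^2y_i^2 \qquad (d=1,\dots,k). \] Furthermore, each $F_{\sigma_k,d}$ is positive semidefinite and, after renaming $x_{d+ik}$ as $x_{i+1}$ and $y_{d+ik}$ as $y_{i+1}$, coincides with the biquadratic form $B_{\Phi^{(n/k,1)}}$.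
   Context: For $n\ge 3$ and $k=1,\dots,n-1$, let $\sigma_k:\{1,\dots,n\}\to\{1,\dots,n\}$ be the permutation $\sigma_k(i)=i+k \bmod n$. The Qi–Hou map $\Phi^{(n,k)}:M_n\to M_n$ is defined by $\Phi^{(n,k)}([a_{ij}])=\mathrm{diag}(b_1,\dots,b_n)-[a_{ij}]$ with $b_i=(n-1)a_{ii}+a_{\sigma_k(i),\sigma_k(i)}$; it is a positive linear map. Its associated biquadratic form, for $x=(x_1,\dots,x_n)^{\rm t},y=(y_1,\dots,y_n)^{\rm t}\in\mathbb R^n$, is \[ B_{\Phi^{(n,k)}}(x:y)=y^{\rm t}\,\Phi^{(n,k)}(xx^{\rm t})\,y=(n-2)\sum_{i=1}^n x_i^2 y_i^2+\sum_{i=1}^n x_{\sigma_k(i)}^2 y_i^2-2\sum_{1\le i<j\le n}x_iy_ix_jy_j , \] which is positive semidefinite since $\Phi^{(n,k)}$ is positive. (In particular $B_{\Phi^{(n/k,1)}}$ is the analogous form in $n/k$ pairs of variables with the cyclic shift $\sigma_1(j)=j+1 \bmod n/k$.) *)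

theory Defs
  imports Complex_Main
begin

text \<open>Indices run over {1..n}. The cyclic shift sigma_k(i) = i + k mod n is read
  with representatives in {1..n} (i.e. the residue 0 is represented by n).\<close>
definition sigma :: "nat \<Rightarrow> nat \<Rightarrow> nat \<Rightarrow> nat" where
  "sigma n k i = (i + k - 1) mod n + 1"

definition qi_hou :: "nat \<Rightarrow> nat \<Rightarrow> (nat \<Rightarrow> nat \<Rightarrow> real) \<Rightarrow> (nat \<Rightarrow> nat \<Rightarrow> real)" where
  "qi_hou n k A = (\<lambda>i j. (if i = j then (real n - 1) * A i i + A (sigma n k i) (sigma n k i) else 0)
                         - A i j)"

definition biquad :: "nat \<Rightarrow> nat \<Rightarrow> (nat \<Rightarrow> real) \<Rightarrow> (nat \<Rightarrow> real) \<Rightarrow> real" where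
  "biquad n k x y = (\<Sum>i\<in>{1..n}. \<Sum>j\<in>{1..n}. y i * qi_hou n k (\<lambda>a b. x a * x b) i j * y j)"

definition Fform :: "nat \<Rightarrow> nat \<Rightarrow> nat \<Rightarrow> (nat \<Rightarrow> real) \<Rightarrow> (nat \<Rightarrow> real) \<Rightarrow> real" where
  "Fform n k d x y =
     (real (n div k) - 2) * (\<Sum>i\<in>{i. 1 \<le> i \<and> i \<le> n \<and> i mod k = d mod k}. (x i)^2 * (y i)^2)
     - 2 * (\<Sum>(i,j)\<in>{(i,j). 1 \<le> i \<and> i < j \<and> j \<le> n \<and> i mod k = d mod k \<and> j mod k = d mod k}.
              x i * y i * x j * y j)
     + (\<Sum>i\<in>{i. 1 \<le> i \<and> i \<le> n \<and> i mod k = d mod k}. (x (sigma n k i))^2 * (y i)^2)"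

end

theory Submission
  imports Defs "HOL-Analysis.Analysis"
begin


lemma sq_sum_offdiag:
  fixes r :: "'a \<Rightarrow> real"
  assumes "finite I"
  shows "(\<Sum>i\<in>I. r i)^2 = (\<Sum>i\<in>I. (r i)^2) + (\<Sum>(i,j)\<in>Sigma I (\<lambda>i. I - {i}). r i * r j)"
proof -
  have "(\<Sum>i\<in>I. r i)^2 = (\<Sum>i\<in>I. \<Sum>j\<in>I. r i * r j)"
    by (simp add: power2_eq_square sum_product)
  also have "\<dots> = (\<Sum>i\<in>I. (r i)^2 + (\<Sum>j\<in>I - {i}. r i * r j))"
    by (intro sum.cong refl) (simp add: assms sum.remove power2_eq_square)
  also have "\<dots> = (\<Sum>i\<in>I. (r i)^2) + (\<Sum>i\<in>I. \<Sum>j\<in>I - {i}. r i * r j)"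
    by (simp add: sum.distrib)
  also have "(\<Sum>i\<in>I. \<Sum>j\<in>I - {i}. r i * r j) = (\<Sum>(i,j)\<in>Sigma I (\<lambda>i. I - {i}). r i * r j)"
    using assms by (subst sum.Sigma) auto
  finally show ?thesis .
qed

lemma amgm_pairs:
  fixes r :: "'a \<Rightarrow> real"
  assumes fin: "finite I" and pos: "\<And>i. i \<in> I \<Longrightarrow> r i > 0" and pr: "(\<Prod>i\<in>I. r i) = 1"
    and c: "card I \<ge> 2"
  shows "(\<Sum>i\<in>I. r i)^2 - (\<Sum>i\<in>I. (r i)^2) \<ge> real (card I) * (real (card I) - 1)"
proof -
  define Off where "Off = Sigma I (\<lambda>i. I - {i})"
  have finO: "finite Off" using fin by (simp add: Off_def)
  have cardO: "card Off = card I * (card I - 1)"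
    unfolding Off_def using fin by (simp add: card_Diff_singleton)
  have cardOr: "real (card Off) = real (card I) * (real (card I) - 1)"
    using cardO c by (simp add: of_nat_diff)
  have Opos: "card Off > 0" using cardO c by simp
  hence One: "Off \<noteq> {}" by auto
  have p1: "(\<Prod>(i,j)\<in>Off. r i) = 1"
  proof -
    have "(\<Prod>(i,j)\<in>Off. r i) = (\<Prod>i\<in>I. \<Prod>j\<in>I - {i}. r i)"
      unfolding Off_def using fin by (subst prod.Sigma) auto
    also have "\<dots> = (\<Prod>i\<in>I. r i ^ (card I - 1))"
      using fin by (intro prod.cong refl) (simp add: card_Diff_singleton)
    also have "\<dots> = (\<Prod>i\<in>I. r i) ^ (card I - 1)" by (simp add: prod_power_distrib)
    finally show ?thesis using pr by simp
  qed
  have p2: "(\<Prod>(i,j)\<in>Off. r j) = 1"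
  proof -
    have "(\<Prod>(i,j)\<in>Off. r j) = (\<Prod>i\<in>I. \<Prod>j\<in>I - {i}. r j)"
      unfolding Off_def using fin by (subst prod.Sigma) auto
    also have "\<dots> = (\<Prod>i\<in>I. 1 / r i)"
    proof (intro prod.cong refl)
      fix i assume "i \<in> I"
      hence "(\<Prod>j\<in>I. r j) = r i * (\<Prod>j\<in>I - {i}. r j)" using fin by (simp add: prod.remove)
      thus "(\<Prod>j\<in>I - {i}. r j) = 1 / r i" using pr pos[OF \<open>i\<in>I\<close>] by (simp add: field_simps)
    qed
    also have "\<dots> = 1" using pr by (simp add: prod_dividef)
    finally show ?thesis .
  qed
  have pp: "(\<Prod>(i,j)\<in>Off. r i * r j) = 1"
    using p1 p2 by (simp add: case_prod_beta prod.distrib)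
  have nn: "\<And>p. p \<in> Off \<Longrightarrow> (case p of (i,j) \<Rightarrow> r i * r j) \<ge> 0"
    unfolding Off_def using pos by (auto intro!: mult_nonneg_nonneg less_imp_le)
  have "(\<Sum>p\<in>Off. (case p of (i,j) \<Rightarrow> r i * r j) / card Off) \<ge> (\<Prod>p\<in>Off. (case p of (i,j) \<Rightarrow> r i * r j)) powr (1 / card Off)"
    by (rule arith_geom_mean[OF finO One nn])
  hence "(\<Sum>p\<in>Off. (case p of (i,j) \<Rightarrow> r i * r j)) / card Off \<ge> 1"
    using pp by (simp add: sum_divide_distrib)
  hence "(\<Sum>p\<in>Off. (case p of (i,j) \<Rightarrow> r i * r j)) \<ge> real (card Off)"
    using Opos by (simp add: field_simps)
  moreover have "(\<Sum>i\<in>I. r i)^2 - (\<Sum>i\<in>I. (r i)^2) = (\<Sum>p\<in>Off. (case p of (i,j) \<Rightarrow> r i * r j))"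
    using sq_sum_offdiag[OF fin, of r] unfolding Off_def by simp
  ultimately show ?thesis using cardOr by simp
qed

lemma lemK:
  fixes r :: "'a \<Rightarrow> real"
  assumes fin: "finite I" and pos: "\<And>i. i \<in> I \<Longrightarrow> r i > 0" and pr: "(\<Prod>i\<in>I. r i) = 1"
    and c: "card I \<ge> 2"
  shows "(\<Sum>i\<in>I. 1 / (real (card I) - 1 + (r i)^2)) \<le> 1"
proof -
  define m where "m = real (card I)"
  have m2: "m \<ge> 2" using c by (simp add: m_def)
  define D where "D i = m - 1 + (r i)^2" for i
  have Dpos: "\<And>i. D i > 0" using m2 by (simp add: D_def add_pos_nonneg)
  have Dne: "\<And>i. D i \<noteq> 0" using Dpos by (metis less_irrefl)
  have "(\<Sum>i\<in>I. r i)^2 = (\<Sum>i\<in>I. (r i / sqrt (D i)) * sqrt (D i))^2"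
    using Dpos by (intro arg_cong[where f="\<lambda>z. z^2"] sum.cong refl) (simp add: less_imp_le Dne)
  also have "\<dots> \<le> (\<Sum>i\<in>I. (r i / sqrt (D i))^2) * (\<Sum>i\<in>I. (sqrt (D i))^2)"
    by (rule Cauchy_Schwarz_ineq_sum)
  also have "\<dots> = (\<Sum>i\<in>I. (r i)^2 / D i) * (\<Sum>i\<in>I. D i)"
    using Dpos by (intro arg_cong2[where f="(*)"] sum.cong refl) (auto simp add: power_divide less_imp_le Dne)
  finally have cs: "(\<Sum>i\<in>I. r i)^2 \<le> (\<Sum>i\<in>I. (r i)^2 / D i) * (\<Sum>i\<in>I. D i)" .
  have sD: "(\<Sum>i\<in>I. D i) = m * (m - 1) + (\<Sum>i\<in>I. (r i)^2)"
    by (simp add: D_def sum.distrib m_def)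
  have am: "(\<Sum>i\<in>I. r i)^2 - (\<Sum>i\<in>I. (r i)^2) \<ge> m * (m - 1)"
    using amgm_pairs[OF fin pos pr c] by (simp add: m_def)
  have sDpos: "(\<Sum>i\<in>I. D i) > 0" using fin c Dpos by (intro sum_pos) auto
  have "(\<Sum>i\<in>I. D i) \<le> (\<Sum>i\<in>I. (r i)^2 / D i) * (\<Sum>i\<in>I. D i)"
    using cs sD am by linarith
  hence ge1: "(\<Sum>i\<in>I. (r i)^2 / D i) \<ge> 1" using sDpos by simp
  have "\<And>i. 1 / D i = (1 - (r i)^2 / D i) / (m - 1)"
  proof -
    fix i
    have "(1 - (r i)^2 / D i) = (m - 1) / D i" using Dne[of i] by (simp add: field_simps D_def)
    moreover have "(m - 1) / D i / (m - 1) = 1 / D i" using m2 by simp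
    ultimately show "1 / D i = (1 - (r i)^2 / D i) / (m - 1)" by simp
  qed
  hence "(\<Sum>i\<in>I. 1 / D i) = (m - (\<Sum>i\<in>I. (r i)^2 / D i)) / (m - 1)"
    by (simp add: sum_divide_distrib[symmetric] sum_subtractf m_def)
  also have "\<dots> \<le> 1" using ge1 m2 by (simp add: field_simps)
  finally show ?thesis by (simp add: D_def m_def)
qed

lemma core_nz:
  fixes x y :: "'a \<Rightarrow> real"
  assumes fin: "finite I" and c: "card I \<ge> 2" and bij: "bij_betw s I I"
    and nz: "\<And>i. i \<in> I \<Longrightarrow> y i \<noteq> 0"
  shows "(\<Sum>i\<in>I. x i * y i)^2 \<le> (real (card I) - 1) * (\<Sum>i\<in>I. (x i)^2 * (y i)^2) + (\<Sum>i\<in>I. (x (s i))^2 * (y i)^2)"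
proof -
  define m where "m = real (card I)"
  have m2: "m \<ge> 2" using c by (simp add: m_def)
  define t where "t = the_inv_into I s"
  have tI: "\<And>j. j \<in> I \<Longrightarrow> t j \<in> I" unfolding t_def
    using bij by (metis bij_betw_def the_inv_into_into order_refl)
  have ts: "\<And>i. i \<in> I \<Longrightarrow> t (s i) = i" unfolding t_def
    using bij by (simp add: bij_betw_def the_inv_into_f_f)
  have bijt: "bij_betw t I I" unfolding t_def using bij by (rule bij_betw_the_inv_into)
  define W where "W j = (m - 1) * (y j)^2 + (y (t j))^2" for j
  have Wpos: "\<And>j. j \<in> I \<Longrightarrow> W j > 0"
    using nz m2 unfolding W_def by (intro add_pos_nonneg mult_pos_pos) auto
  have Wne: "\<And>j. j \<in> I \<Longrightarrow> W j \<noteq> 0" using Wpos by (metis less_irrefl)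
  have shift: "(\<Sum>i\<in>I. (x (s i))^2 * (y i)^2) = (\<Sum>j\<in>I. (x j)^2 * (y (t j))^2)"
  proof -
    have "(\<Sum>j\<in>I. (x j)^2 * (y (t j))^2) = (\<Sum>i\<in>I. (x (s i))^2 * (y (t (s i)))^2)"
      using sum.reindex_bij_betw[OF bij, of "\<lambda>j. (x j)^2 * (y (t j))^2"] by simp
    also have "\<dots> = (\<Sum>i\<in>I. (x (s i))^2 * (y i)^2)" using ts by (intro sum.cong refl) simp
    finally show ?thesis by simp
  qed
  have rhs: "(m - 1) * (\<Sum>i\<in>I. (x i)^2 * (y i)^2) + (\<Sum>i\<in>I. (x (s i))^2 * (y i)^2) = (\<Sum>j\<in>I. (x j)^2 * W j)"
    unfolding shift W_def by (simp add: sum_distrib_left sum.distrib[symmetric] algebra_simps sum_subtractf[symmetric])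
  define r where "r j = \<bar>y (t j)\<bar> / \<bar>y j\<bar>" for j
  have rpos: "\<And>j. j \<in> I \<Longrightarrow> r j > 0" unfolding r_def using nz tI by auto
  have rpr: "(\<Prod>j\<in>I. r j) = 1"
  proof -
    have "(\<Prod>j\<in>I. \<bar>y (t j)\<bar>) = (\<Prod>j\<in>I. \<bar>y j\<bar>)"
      using prod.reindex_bij_betw[OF bijt, of "\<lambda>j. \<bar>y j\<bar>"] by simp
    moreover have "(\<Prod>j\<in>I. \<bar>y j\<bar>) \<noteq> 0" using nz fin by simp
    ultimately show ?thesis unfolding r_def by (simp add: prod_dividef)
  qed
  have K: "(\<Sum>j\<in>I. 1 / (m - 1 + (r j)^2)) \<le> 1"
    using lemK[OF fin rpos rpr c] by (simp add: m_def)
  have tW: "\<And>j. j \<in> I \<Longrightarrow> (y j)^2 / W j = 1 / (m - 1 + (r j)^2)"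
    using nz unfolding W_def r_def by (simp add: field_simps power_divide)
  have K2: "(\<Sum>j\<in>I. (y j)^2 / W j) \<le> 1" using K tW by simp
  have "(\<Sum>i\<in>I. x i * y i)^2 = (\<Sum>i\<in>I. (x i * sqrt (W i)) * (y i / sqrt (W i)))^2"
    using Wpos by (intro arg_cong[where f="\<lambda>z. z^2"] sum.cong refl) (simp add: less_imp_le Wne)
  also have "\<dots> \<le> (\<Sum>i\<in>I. (x i * sqrt (W i))^2) * (\<Sum>i\<in>I. (y i / sqrt (W i))^2)"
    by (rule Cauchy_Schwarz_ineq_sum)
  also have "\<dots> = (\<Sum>i\<in>I. (x i)^2 * W i) * (\<Sum>i\<in>I. (y i)^2 / W i)"
    using Wpos by (intro arg_cong2[where f="(*)"] sum.cong refl) (auto simp add: power_divide power_mult_distrib less_imp_le Wne)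
  also have "\<dots> \<le> (\<Sum>i\<in>I. (x i)^2 * W i)"
  proof -
    have "(\<Sum>i\<in>I. (x i)^2 * W i) \<ge> 0" using Wpos by (intro sum_nonneg) (simp add: less_imp_le)
    thus ?thesis using K2 by (simp add: mult_left_le)
  qed
  finally show ?thesis using rhs by (simp add: m_def)
qed

lemma core:
  fixes x y :: "'a \<Rightarrow> real"
  assumes fin: "finite I" and c: "card I \<ge> 2" and bij: "bij_betw s I I"
  shows "(\<Sum>i\<in>I. x i * y i)^2 \<le> (real (card I) - 1) * (\<Sum>i\<in>I. (x i)^2 * (y i)^2) + (\<Sum>i\<in>I. (x (s i))^2 * (y i)^2)"
proof -
  define ye where "ye e i = (if y i = 0 then e else y i)" for e :: real and i
  have yl: "((\<lambda>e. ye e i) \<longlongrightarrow> y i) (at 0)" for i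
    by (cases "y i = 0") (simp_all add: ye_def tendsto_ident_at)
  have l1: "((\<lambda>e. (\<Sum>i\<in>I. x i * ye e i)^2) \<longlongrightarrow> (\<Sum>i\<in>I. x i * y i)^2) (at 0)"
    by (intro tendsto_intros yl)
  have l2: "((\<lambda>e. (real (card I) - 1) * (\<Sum>i\<in>I. (x i)^2 * (ye e i)^2) + (\<Sum>i\<in>I. (x (s i))^2 * (ye e i)^2))
     \<longlongrightarrow> (real (card I) - 1) * (\<Sum>i\<in>I. (x i)^2 * (y i)^2) + (\<Sum>i\<in>I. (x (s i))^2 * (y i)^2)) (at 0)"
    by (intro tendsto_intros yl)
  have ev: "\<forall>\<^sub>F e in at 0. (\<Sum>i\<in>I. x i * ye e i)^2 \<le> (real (card I) - 1) * (\<Sum>i\<in>I. (x i)^2 * (ye e i)^2) + (\<Sum>i\<in>I. (x (s i))^2 * (ye e i)^2)"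
    unfolding eventually_at_filter
    by (intro always_eventually allI impI core_nz[OF fin c bij]) (simp add: ye_def)
  show ?thesis by (rule tendsto_le[OF _ l2 l1 ev]) (simp add: trivial_limit_at)
qed



lemma biquad_eq:
  "biquad n k x y = (real n - 1) * (\<Sum>i\<in>{1..n}. (x i)^2 * (y i)^2)
     + (\<Sum>i\<in>{1..n}. (x (Defs.sigma n k i))^2 * (y i)^2) - (\<Sum>i\<in>{1..n}. x i * y i)^2"
proof -
  have inner: "(\<Sum>j\<in>{1..n}. y i * qi_hou n k (\<lambda>a b. x a * x b) i j * y j)
      = (real n - 1) * (x i)^2 * (y i)^2 + (x (Defs.sigma n k i))^2 * (y i)^2 - x i * y i * (\<Sum>j\<in>{1..n}. x j * y j)"
    if "i \<in> {1..n}" for i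
  proof -
    have "(\<Sum>j\<in>{1..n}. y i * qi_hou n k (\<lambda>a b. x a * x b) i j * y j)
       = (\<Sum>j\<in>{1..n}. (if i = j then y i * ((real n - 1) * (x i * x i) + x (Defs.sigma n k i) * x (Defs.sigma n k i)) * y i else 0) - x i * y i * (x j * y j))"
      unfolding qi_hou_def by (intro sum.cong refl) (auto simp: algebra_simps)
    also have "\<dots> = y i * ((real n - 1) * (x i * x i) + x (Defs.sigma n k i) * x (Defs.sigma n k i)) * y i - x i * y i * (\<Sum>j\<in>{1..n}. x j * y j)"
      using that by (simp add: sum_subtractf sum_distrib_left)
    finally show ?thesis by (simp add: power2_eq_square algebra_simps)
  qed
  have "biquad n k x y = (\<Sum>i\<in>{1..n}. (real n - 1) * (x i)^2 * (y i)^2 + (x (Defs.sigma n k i))^2 * (y i)^2 - x i * y i * (\<Sum>j\<in>{1..n}. x j * y j))"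
    unfolding biquad_def using inner by (intro sum.cong refl) auto
  also have "\<dots> = (real n - 1) * (\<Sum>i\<in>{1..n}. (x i)^2 * (y i)^2)
     + (\<Sum>i\<in>{1..n}. (x (Defs.sigma n k i))^2 * (y i)^2) - (\<Sum>i\<in>{1..n}. x i * y i)^2"
  proof -
    have sq: "(\<Sum>i\<in>{1..n}. x i * y i)^2 = (\<Sum>i\<in>{1..n}. x i * y i * (\<Sum>j\<in>{1..n}. x j * y j))"
      by (simp add: power2_eq_square sum_distrib_right)
    show ?thesis unfolding sq by (simp add: sum_subtractf sum.distrib sum_distrib_left mult.assoc)
  qed
  finally show ?thesis .
qed

lemma sigma1: "m \<ge> 1 \<Longrightarrow> Defs.sigma m 1 t = t mod m + 1"
  by (simp add: sigma_def)

lemma bij_sigma1: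
  assumes "m \<ge> 1" shows "bij_betw (Defs.sigma m 1) {1..m} {1..m}"
proof -
  have sub: "Defs.sigma m 1 ` {1..m} \<subseteq> {1..m}"
    using assms by (auto simp: sigma_def Suc_leI)
  have inj: "inj_on (Defs.sigma m 1) {1..m}"
  proof
    fix i j assume i: "i \<in> {1..m}" and j: "j \<in> {1..m}" and e: "Defs.sigma m 1 i = Defs.sigma m 1 j"
    have mi: "i mod m = (if i = m then 0 else i)" using i by auto
    have mj: "j mod m = (if j = m then 0 else j)" using j by auto
    show "i = j" using e i j mi mj assms by (auto simp: sigma_def split: if_splits)
  qed
  show ?thesis unfolding bij_betw_def using endo_inj_surj[OF _ sub inj] inj by simp
qed

lemma biquad_nonneg:
  assumes "m \<ge> 2" shows "biquad m 1 x y \<ge> 0"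
proof -
  have "(\<Sum>i\<in>{1..m}. x i * y i)^2 \<le> (real (card {1..m}) - 1) * (\<Sum>i\<in>{1..m}. (x i)^2 * (y i)^2) + (\<Sum>i\<in>{1..m}. (x (Defs.sigma m 1 i))^2 * (y i)^2)"
    using assms by (intro core bij_sigma1) auto
  thus ?thesis by (simp add: biquad_eq)
qed



lemma swap_split:
  fixes G :: "nat \<Rightarrow> nat \<Rightarrow> real"
  assumes fin: "finite U" and sym: "\<And>i j. R i j \<Longrightarrow> R j i" and irr: "\<And>i. \<not> R i i"
  shows "(\<Sum>(i,j)\<in>{(i,j). i \<in> U \<and> j \<in> U \<and> R i j}. G i j)
       = (\<Sum>(i,j)\<in>{(i,j). i \<in> U \<and> j \<in> U \<and> R i j \<and> i < j}. G i j + G j i)"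
proof -
  define L where "L = {(i,j). i \<in> U \<and> j \<in> U \<and> R i j \<and> i < j}"
  define H where "H = {(i,j). i \<in> U \<and> j \<in> U \<and> R i j \<and> j < i}"
  have finL: "finite L" unfolding L_def by (rule finite_subset[of _ "U \<times> U"]) (auto simp: fin)
  have finH: "finite H" unfolding H_def by (rule finite_subset[of _ "U \<times> U"]) (auto simp: fin)
  have un: "{(i,j). i \<in> U \<and> j \<in> U \<and> R i j} = L \<union> H"
    unfolding L_def H_def using irr by (auto simp: neq_iff) (metis linorder_neqE_nat)
  have dis: "L \<inter> H = {}" unfolding L_def H_def by auto
  have Himg: "H = (\<lambda>(i,j). (j,i)) ` L" unfolding L_def H_def using sym by (auto simp: image_def)
  have inj: "inj_on (\<lambda>(i,j). (j,i)) L" by (auto simp: inj_on_def)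
  have "(\<Sum>(i,j)\<in>H. G i j) = (\<Sum>(i,j)\<in>L. G j i)"
    unfolding Himg by (subst sum.reindex[OF inj]) (simp add: case_prod_beta comp_def)
  moreover have "(\<Sum>(i,j)\<in>L \<union> H. G i j) = (\<Sum>(i,j)\<in>L. G i j) + (\<Sum>(i,j)\<in>H. G i j)"
    by (rule sum.union_disjoint[OF finL finH dis])
  ultimately show ?thesis unfolding un by (simp add: L_def[symmetric] sum.distrib case_prod_beta)
qed

lemma sq_sum_lt:
  fixes f :: "nat \<Rightarrow> real"
  assumes fin: "finite U"
  shows "(\<Sum>i\<in>U. f i)^2 = (\<Sum>i\<in>U. (f i)^2) + 2 * (\<Sum>(i,j)\<in>{(i,j). i \<in> U \<and> j \<in> U \<and> i < j}. f i * f j)"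
proof -
  have "Sigma U (\<lambda>i. U - {i}) = {(i,j). i \<in> U \<and> j \<in> U \<and> i \<noteq> j}" by auto
  hence "(\<Sum>(i,j)\<in>Sigma U (\<lambda>i. U - {i}). f i * f j) = (\<Sum>(i,j)\<in>{(i,j). i \<in> U \<and> j \<in> U \<and> i \<noteq> j \<and> i < j}. f i * f j + f j * f i)"
    using swap_split[OF fin, of "\<lambda>i j. i \<noteq> j" "\<lambda>i j. f i * f j"] by simp
  also have "\<dots> = 2 * (\<Sum>(i,j)\<in>{(i,j). i \<in> U \<and> j \<in> U \<and> i < j}. f i * f j)"
    by (simp add: sum_distrib_left case_prod_beta) (intro sum.cong, auto)
  finally show ?thesis using sq_sum_offdiag[OF fin, of f] by simp
qed



lemma class_bij:
  fixes k n m d :: nat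
  assumes k: "k \<ge> 1" and n: "n = m * k" and d: "d \<in> {1..k}"
  shows "bij_betw (\<lambda>t. d + (t - 1) * k) {1..m} {i. 1 \<le> i \<and> i \<le> n \<and> i mod k = d mod k}"
proof (rule bij_betwI')
  fix s t assume "s \<in> {1..m}" "t \<in> {1..m}"
  moreover have "(s - 1) * k = (t - 1) * k \<Longrightarrow> s - 1 = t - 1" using k mult_right_cancel[of k "s - 1" "t - 1"] by simp
  ultimately show "(d + (s - 1) * k = d + (t - 1) * k) = (s = t)" by auto
next
  fix t assume t: "t \<in> {1..m}"
  have "t - 1 \<le> m - 1" using t by auto
  hence "(t - 1) * k \<le> (m - 1) * k" by (rule mult_right_mono) simp
  hence "d + (t - 1) * k \<le> k + (m - 1) * k" using d by (intro add_mono) auto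
  also have "\<dots> = n" using n t by (cases m) auto
  finally show "d + (t - 1) * k \<in> {i. 1 \<le> i \<and> i \<le> n \<and> i mod k = d mod k}" using d by auto
next
  fix i assume "i \<in> {i. 1 \<le> i \<and> i \<le> n \<and> i mod k = d mod k}"
  hence i1: "1 \<le> i" and i2: "i \<le> n" and im: "i mod k = d mod k" by auto
  have di: "d \<le> i"
  proof (cases "d = k")
    case True
    then have "i mod k = 0" using im by simp
    then have "k dvd i" by auto
    then show ?thesis using i1 True by (auto dest: dvd_imp_le)
  next
    case False
    then have "d < k" using d by auto
    then have "i mod k = d" using im by simp
    then show ?thesis by (metis mod_less_eq_dividend)
  qed
  have "(i - d) mod k = 0" using im di by (simp add: mod_eq_dvd_iff_nat)
  then obtain q where q: "i - d = k * q" by auto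
  have "i - d < n" using i2 d di by auto
  hence "k * q < k * m" using q n by (simp add: mult.commute)
  hence qm: "q < m" by simp
  show "\<exists>t\<in>{1..m}. i = d + (t - 1) * k"
    by (rule bexI[of _ "q + 1"]) (use q di qm in \<open>auto simp: mult.commute\<close>)
qed

lemma sigma_h:
  fixes k n m d t :: nat
  assumes k: "k \<ge> 1" and n: "n = m * k" and d: "d \<in> {1..k}" and t: "t \<in> {1..m}"
  shows "Defs.sigma n k (d + (t - 1) * k) = d + (Defs.sigma m 1 t - 1) * k"
proof (cases "t = m")
  case True
  have "d + (t - 1) * k + k - 1 = (d - 1) + n" using True n d t by (cases m) (auto simp: algebra_simps)
  hence "Defs.sigma n k (d + (t - 1) * k) = (d - 1) mod n + 1" by (simp add: sigma_def)
  also have "(d - 1) mod n = d - 1"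
  proof -
    have "k \<le> n" using n t by (cases m) auto
    thus ?thesis using d by auto
  qed
  finally show ?thesis using True d t by (simp add: sigma_def)
next
  case False
  hence tm: "t < m" using t by auto
  have e: "d + (t - 1) * k + k - 1 = d - 1 + t * k" using t d by (cases t) (auto simp: algebra_simps)
  have "t \<le> m - 1" using tm by simp
  hence "t * k \<le> (m - 1) * k" by (rule mult_right_mono) simp
  moreover have "d - 1 < k" using d by auto
  ultimately have "d - 1 + t * k < k + (m - 1) * k" by linarith
  also have "k + (m - 1) * k = n" using n tm by (cases m) auto
  finally have "d - 1 + t * k < n" .
  hence "Defs.sigma n k (d + (t - 1) * k) = d + t * k" using e d by (simp add: sigma_def)
  moreover have "Defs.sigma m 1 t = t + 1" using tm by (simp add: sigma_def)
  ultimately show ?thesis by simp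
qed



lemma part3:
  fixes k n m d :: nat
  assumes k: "k \<ge> 1" and n: "n = m * k" and d: "d \<in> {1..k}"
  shows "Fform n k d x y = biquad m 1 (\<lambda>t. x (d + (t - 1) * k)) (\<lambda>t. y (d + (t - 1) * k))"
proof -
  define C where "C = {i. 1 \<le> i \<and> i \<le> n \<and> i mod k = d mod k}"
  define h where "h t = d + (t - 1) * k" for t
  have bij: "bij_betw h {1..m} C" unfolding C_def h_def by (rule class_bij[OF k n d])
  have finC: "finite C" unfolding C_def by (rule finite_subset[of _ "{1..n}"]) auto
  have re: "\<And>f. (\<Sum>i\<in>C. f i) = (\<Sum>t\<in>{1..m}. f (h t))"
    using sum.reindex_bij_betw[OF bij] by metis
  have pairs: "{(i,j). 1 \<le> i \<and> i < j \<and> j \<le> n \<and> i mod k = d mod k \<and> j mod k = d mod k} = {(i,j). i \<in> C \<and> j \<in> C \<and> i < j}"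
    unfolding C_def by auto
  have sq: "(\<Sum>i\<in>C. x i * y i)^2 = (\<Sum>i\<in>C. (x i * y i)^2) + 2 * (\<Sum>(i,j)\<in>{(i,j). i \<in> C \<and> j \<in> C \<and> i < j}. x i * y i * (x j * y j))"
    by (rule sq_sum_lt[OF finC])
  have mdiv: "n div k = m" using n k by simp
  have sh: "\<And>t. t \<in> {1..m} \<Longrightarrow> x (h (Defs.sigma m 1 t)) = x (Defs.sigma n k (h t))"
    unfolding h_def using sigma_h[OF k n d] by simp
  have Fe: "Fform n k d x y = (real m - 2) * (\<Sum>i\<in>C. (x i)^2 * (y i)^2)
        - 2 * (\<Sum>(i,j)\<in>{(i,j). i \<in> C \<and> j \<in> C \<and> i < j}. x i * y i * (x j * y j))
        + (\<Sum>i\<in>C. (x (Defs.sigma n k i))^2 * (y i)^2)"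
    unfolding Fform_def pairs mdiv C_def[symmetric] by (simp add: mult.assoc)
  have Be: "biquad m 1 (\<lambda>t. x (h t)) (\<lambda>t. y (h t)) = (real m - 1) * (\<Sum>i\<in>C. (x i)^2 * (y i)^2)
        + (\<Sum>i\<in>C. (x (Defs.sigma n k i))^2 * (y i)^2) - (\<Sum>i\<in>C. x i * y i)^2"
  proof -
    have "(\<Sum>t\<in>{1..m}. (x (h (Defs.sigma m 1 t)))^2 * (y (h t))^2) = (\<Sum>t\<in>{1..m}. (x (Defs.sigma n k (h t)))^2 * (y (h t))^2)"
      by (intro sum.cong refl) (metis sh)
    thus ?thesis unfolding biquad_eq re by simp
  qed
  show ?thesis unfolding h_def[symmetric] Fe Be sq by (simp add: power_mult_distrib algebra_simps)
qed



definition rep :: "nat \<Rightarrow> nat \<Rightarrow> nat" where "rep k i = (if i mod k = 0 then k else i mod k)"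

lemma rep_in: "k \<ge> 1 \<Longrightarrow> rep k i \<in> {1..k}"
  unfolding rep_def by (auto simp: Suc_leI)

lemma rep_mod: "rep k i mod k = i mod k"
  unfolding rep_def by auto

lemma rep_uniq: "d \<in> {1..k} \<Longrightarrow> d mod k = i mod k \<Longrightarrow> d = rep k i"
  unfolding rep_def by (cases "d = k") auto

lemma rep_inj: fixes d e k :: nat shows "d \<in> {1..k} \<Longrightarrow> e \<in> {1..k} \<Longrightarrow> d mod k = e mod k \<Longrightarrow> d = e"
  using rep_uniq[of d k e] rep_uniq[of e k e] by simp

lemma union_classes:
  fixes k n :: nat and f :: "nat \<Rightarrow> real"
  assumes k: "k \<ge> 1"
  shows "(\<Sum>d=1..k. \<Sum>i\<in>{i. 1 \<le> i \<and> i \<le> n \<and> i mod k = d mod k}. f i) = (\<Sum>i\<in>{1..n}. f i)"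
proof -
  have "(\<Sum>i\<in>(\<Union>d\<in>{1..k}. {i. 1 \<le> i \<and> i \<le> n \<and> i mod k = d mod k}). f i)
      = (\<Sum>d=1..k. \<Sum>i\<in>{i. 1 \<le> i \<and> i \<le> n \<and> i mod k = d mod k}. f i)"
  proof (rule sum.UNION_disjoint)
    show "\<forall>d\<in>{1..k}. finite {i. 1 \<le> i \<and> i \<le> n \<and> i mod k = d mod k}" by auto
    show "\<forall>d\<in>{1..k}. \<forall>e\<in>{1..k}. d \<noteq> e \<longrightarrow> {i. 1 \<le> i \<and> i \<le> n \<and> i mod k = d mod k} \<inter> {i. 1 \<le> i \<and> i \<le> n \<and> i mod k = e mod k} = {}"
    proof (intro ballI impI)
      fix d e assume "d \<in> {1..k}" "e \<in> {1..k}" "d \<noteq> e"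
      hence "d mod k \<noteq> e mod k" using rep_inj by blast
      thus "{i. 1 \<le> i \<and> i \<le> n \<and> i mod k = d mod k} \<inter> {i. 1 \<le> i \<and> i \<le> n \<and> i mod k = e mod k} = {}" by auto
    qed
  qed simp
  moreover have "(\<Union>d\<in>{1..k}. {i. 1 \<le> i \<and> i \<le> n \<and> i mod k = d mod k}) = {1..n}"
  proof
    show "(\<Union>d\<in>{1..k}. {i. 1 \<le> i \<and> i \<le> n \<and> i mod k = d mod k}) \<subseteq> {1..n}" by auto
    show "{1..n} \<subseteq> (\<Union>d\<in>{1..k}. {i. 1 \<le> i \<and> i \<le> n \<and> i mod k = d mod k})"
    proof
      fix i assume "i \<in> {1..n}"
      thus "i \<in> (\<Union>d\<in>{1..k}. {i. 1 \<le> i \<and> i \<le> n \<and> i mod k = d mod k})"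
        using rep_in[OF k, of i] rep_mod[of k i] by (intro UN_I[of "rep k i"]) auto
    qed
  qed
  ultimately show ?thesis by simp
qed

lemma union_classes2:
  fixes k n :: nat and g :: "nat \<times> nat \<Rightarrow> real"
  assumes k: "k \<ge> 1"
  shows "(\<Sum>d=1..k. \<Sum>p\<in>{(i,j). 1 \<le> i \<and> i < j \<and> j \<le> n \<and> i mod k = d mod k \<and> j mod k = d mod k}. g p)
     = (\<Sum>p\<in>{(i,j). 1 \<le> i \<and> i < j \<and> j \<le> n \<and> i mod k = j mod k}. g p)"
proof -
  have fin: "\<And>P. finite {(i,j). 1 \<le> i \<and> i < j \<and> j \<le> n \<and> P i j}"
    by (rule finite_subset[of _ "{1..n} \<times> {1..n}"]) auto
  have "(\<Sum>p\<in>(\<Union>d\<in>{1..k}. {(i,j). 1 \<le> i \<and> i < j \<and> j \<le> n \<and> i mod k = d mod k \<and> j mod k = d mod k}). g p)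
      = (\<Sum>d=1..k. \<Sum>p\<in>{(i,j). 1 \<le> i \<and> i < j \<and> j \<le> n \<and> i mod k = d mod k \<and> j mod k = d mod k}. g p)"
  proof (rule sum.UNION_disjoint)
    show "\<forall>d\<in>{1..k}. finite {(i,j). 1 \<le> i \<and> i < j \<and> j \<le> n \<and> i mod k = d mod k \<and> j mod k = d mod k}"
      by (intro ballI, rule finite_subset[of _ "{1..n} \<times> {1..n}"]) auto
    show "\<forall>d\<in>{1..k}. \<forall>e\<in>{1..k}. d \<noteq> e \<longrightarrow> {(i,j). 1 \<le> i \<and> i < j \<and> j \<le> n \<and> i mod k = d mod k \<and> j mod k = d mod k} \<inter> {(i,j). 1 \<le> i \<and> i < j \<and> j \<le> n \<and> i mod k = e mod k \<and> j mod k = e mod k} = {}"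
    proof (intro ballI impI)
      fix d e assume "d \<in> {1..k}" "e \<in> {1..k}" "d \<noteq> e"
      hence "d mod k \<noteq> e mod k" using rep_inj by blast
      thus "{(i,j). 1 \<le> i \<and> i < j \<and> j \<le> n \<and> i mod k = d mod k \<and> j mod k = d mod k} \<inter> {(i,j). 1 \<le> i \<and> i < j \<and> j \<le> n \<and> i mod k = e mod k \<and> j mod k = e mod k} = {}" by auto
    qed
  qed simp
  moreover have "(\<Union>d\<in>{1..k}. {(i,j). 1 \<le> i \<and> i < j \<and> j \<le> n \<and> i mod k = d mod k \<and> j mod k = d mod k})
     = {(i,j). 1 \<le> i \<and> i < j \<and> j \<le> n \<and> i mod k = j mod k}"
  proof
    show "(\<Union>d\<in>{1..k}. {(i,j). 1 \<le> i \<and> i < j \<and> j \<le> n \<and> i mod k = d mod k \<and> j mod k = d mod k})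
     \<subseteq> {(i,j). 1 \<le> i \<and> i < j \<and> j \<le> n \<and> i mod k = j mod k}" by auto
  next
    show "{(i,j). 1 \<le> i \<and> i < j \<and> j \<le> n \<and> i mod k = j mod k} \<subseteq> (\<Union>d\<in>{1..k}. {(i,j). 1 \<le> i \<and> i < j \<and> j \<le> n \<and> i mod k = d mod k \<and> j mod k = d mod k})"
    proof
      fix p assume "p \<in> {(i,j). 1 \<le> i \<and> i < j \<and> j \<le> n \<and> i mod k = j mod k}"
      then obtain i j where p: "p = (i,j)" "1 \<le> i" "i < j" "j \<le> n" "i mod k = j mod k" by auto
      show "p \<in> (\<Union>d\<in>{1..k}. {(i,j). 1 \<le> i \<and> i < j \<and> j \<le> n \<and> i mod k = d mod k \<and> j mod k = d mod k})"
        using p rep_in[OF k, of i] rep_mod[of k i] by (intro UN_I[of "rep k i"]) auto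
    qed
  qed
  ultimately show ?thesis by simp
qed



lemma count_diff:
  fixes k n m i :: nat
  assumes k: "k \<ge> 1" and n: "n = m * k"
  shows "card {j\<in>{1..n}. j mod k \<noteq> i mod k} = n - m"
proof -
  define C where "C = {j. 1 \<le> j \<and> j \<le> n \<and> j mod k = rep k i mod k}"
  have "card {1..m} = card C" unfolding C_def by (rule bij_betw_same_card[OF class_bij[OF k n rep_in[OF k]]])
  hence cC: "card C = m" by simp
  have "{j\<in>{1..n}. j mod k \<noteq> i mod k} = {1..n} - C" unfolding C_def by (auto simp: rep_mod)
  moreover have "C \<subseteq> {1..n}" unfolding C_def by auto
  ultimately show ?thesis using cC by (simp add: card_Diff_subset finite_subset)
qed

lemma part1:
  fixes k n m :: nat
  assumes k: "k \<ge> 1" and n: "n = m * k"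
  shows "biquad n k x y = (\<Sum>d=1..k. Fform n k d x y)
            + (\<Sum>(i,j)\<in>{(i,j). 1 \<le> i \<and> i < j \<and> j \<le> n \<and> i mod k \<noteq> j mod k}.
                 (x i * y i - x j * y j)^2)"
proof -
  define a where "a i = x i * y i" for i
  define A2 where "A2 = (\<Sum>i\<in>{1..n}. (x i)^2 * (y i)^2)"
  define T where "T = (\<Sum>i\<in>{1..n}. (x (Defs.sigma n k i))^2 * (y i)^2)"
  define Ps where "Ps = {(i,j). 1 \<le> i \<and> i < j \<and> j \<le> n \<and> i mod k = j mod k}"
  define Pd where "Pd = {(i,j). 1 \<le> i \<and> i < j \<and> j \<le> n \<and> i mod k \<noteq> j mod k}"
  have mdiv: "n div k = m" using n k by simp
  have mn: "m \<le> n" using n k by simp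
  have finPs: "finite Ps" unfolding Ps_def by (rule finite_subset[of _ "{1..n} \<times> {1..n}"]) auto
  have finPd: "finite Pd" unfolding Pd_def by (rule finite_subset[of _ "{1..n} \<times> {1..n}"]) auto
  have SF: "(\<Sum>d=1..k. Fform n k d x y) = (real m - 2) * A2 - 2 * (\<Sum>(i,j)\<in>Ps. x i * y i * x j * y j) + T"
  proof -
    have e1: "(\<Sum>d=1..k. \<Sum>i\<in>{i. 1 \<le> i \<and> i \<le> n \<and> i mod k = d mod k}. (x i)^2 * (y i)^2) = A2"
      unfolding A2_def by (rule union_classes[OF k])
    have e2: "(\<Sum>d=1..k. \<Sum>i\<in>{i. 1 \<le> i \<and> i \<le> n \<and> i mod k = d mod k}. (x (Defs.sigma n k i))^2 * (y i)^2) = T"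
      unfolding T_def by (rule union_classes[OF k])
    have e3: "(\<Sum>d=1..k. \<Sum>(i,j)\<in>{(i,j). 1 \<le> i \<and> i < j \<and> j \<le> n \<and> i mod k = d mod k \<and> j mod k = d mod k}. x i * y i * x j * y j)
       = (\<Sum>(i,j)\<in>Ps. x i * y i * x j * y j)"
      unfolding Ps_def by (rule union_classes2[OF k])
    show ?thesis unfolding Fform_def mdiv
      by (simp only: sum.distrib sum_subtractf sum_distrib_left[symmetric] e1 e2 e3)
  qed
  have Pall: "{(i,j). i \<in> {1..n} \<and> j \<in> {1..n} \<and> i < j} = Ps \<union> Pd" unfolding Ps_def Pd_def by auto
  have dis: "Ps \<inter> Pd = {}" unfolding Ps_def Pd_def by auto
  have S2: "(\<Sum>i\<in>{1..n}. x i * y i)^2 = A2 + 2 * ((\<Sum>(i,j)\<in>Ps. x i * y i * x j * y j) + (\<Sum>(i,j)\<in>Pd. x i * y i * x j * y j))"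
    using sq_sum_lt[of "{1..n}" "\<lambda>i. x i * y i"]
    unfolding Pall sum.union_disjoint[OF finPs finPd dis] A2_def
    by (simp add: power_mult_distrib mult.assoc)
  have cnt: "(\<Sum>(i,j)\<in>Pd. (x i * y i)^2 + (x j * y j)^2) = (real n - real m) * A2"
  proof -
    have "(\<Sum>(i,j)\<in>{(i,j). i \<in> {1..n} \<and> j \<in> {1..n} \<and> i mod k \<noteq> j mod k}. (x i * y i)^2)
        = (\<Sum>(i,j)\<in>{(i,j). i \<in> {1..n} \<and> j \<in> {1..n} \<and> i mod k \<noteq> j mod k \<and> i < j}. (x i * y i)^2 + (x j * y j)^2)"
      by (rule swap_split) auto
    also have "{(i,j). i \<in> {1..n} \<and> j \<in> {1..n} \<and> i mod k \<noteq> j mod k \<and> i < j} = Pd" unfolding Pd_def by auto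
    finally have 1: "(\<Sum>(i,j)\<in>Pd. (x i * y i)^2 + (x j * y j)^2) = (\<Sum>(i,j)\<in>{(i,j). i \<in> {1..n} \<and> j \<in> {1..n} \<and> i mod k \<noteq> j mod k}. (x i * y i)^2)" ..
    have seq: "{(i,j). i \<in> {1..n} \<and> j \<in> {1..n} \<and> i mod k \<noteq> j mod k} = Sigma {1..n} (\<lambda>i. {j\<in>{1..n}. j mod k \<noteq> i mod k})" by auto
    have "(\<Sum>(i,j)\<in>{(i,j). i \<in> {1..n} \<and> j \<in> {1..n} \<and> i mod k \<noteq> j mod k}. (x i * y i)^2)
       = (\<Sum>i\<in>{1..n}. \<Sum>j\<in>{j\<in>{1..n}. j mod k \<noteq> i mod k}. (x i * y i)^2)"
      unfolding seq by (subst sum.Sigma) auto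
    also have "\<dots> = (\<Sum>i\<in>{1..n}. (real n - real m) * ((x i)^2 * (y i)^2))"
      using count_diff[OF k n] mn by (simp add: power_mult_distrib of_nat_diff)
    also have "\<dots> = (real n - real m) * A2" unfolding A2_def by (simp add: sum_distrib_left)
    finally show ?thesis using 1 by simp
  qed
  have D: "(\<Sum>(i,j)\<in>Pd. (x i * y i - x j * y j)^2) = (real n - real m) * A2 - 2 * (\<Sum>(i,j)\<in>Pd. x i * y i * x j * y j)"
  proof -
    have "(\<Sum>(i,j)\<in>Pd. (x i * y i - x j * y j)^2) = (\<Sum>(i,j)\<in>Pd. ((x i * y i)^2 + (x j * y j)^2) - 2 * (x i * y i * x j * y j))"
      by (intro sum.cong refl) (auto simp: power2_eq_square algebra_simps)
    also have "\<dots> = (\<Sum>(i,j)\<in>Pd. (x i * y i)^2 + (x j * y j)^2) - 2 * (\<Sum>(i,j)\<in>Pd. x i * y i * x j * y j)"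
      by (simp add: sum_subtractf sum_distrib_left case_prod_beta)
    finally show ?thesis using cnt by simp
  qed
  have B: "biquad n k x y = (real n - 1) * A2 + T - (\<Sum>i\<in>{1..n}. x i * y i)^2"
    unfolding biquad_eq A2_def T_def ..
  show ?thesis unfolding Pd_def[symmetric] B SF D S2 by (simp add: algebra_simps)
qed


theorem proposition3:
  fixes n k :: nat
  assumes "n \<ge> 3" and "1 \<le> k" and "k \<le> n - 1"
    and "k dvd n" and "n div k > 1"
  shows "(\<forall>x y. biquad n k x y =
            (\<Sum>d=1..k. Fform n k d x y)
            + (\<Sum>(i,j)\<in>{(i,j). 1 \<le> i \<and> i < j \<and> j \<le> n \<and> i mod k \<noteq> j mod k}.
                 (x i * y i - x j * y j)^2))
       \<and> (\<forall>d\<in>{1..k}. \<forall>x y. Fform n k d x y \<ge> 0)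
       \<and> (\<forall>d\<in>{1..k}. \<forall>x y. Fform n k d x y =
              biquad (n div k) 1 (\<lambda>m. x (d + (m - 1) * k)) (\<lambda>m. y (d + (m - 1) * k)))"
proof -
  have k: "k \<ge> 1" using assms by simp
  have n: "n = (n div k) * k" using assms(4) by simp
  have m2: "n div k \<ge> 2" using assms(5) by simp
  have P3: "\<forall>d\<in>{1..k}. \<forall>x y. Fform n k d x y =
              biquad (n div k) 1 (\<lambda>m. x (d + (m - 1) * k)) (\<lambda>m. y (d + (m - 1) * k))"
    using part3[OF k n] by blast
  moreover have "\<forall>d\<in>{1..k}. \<forall>x y. Fform n k d x y \<ge> 0"
    using P3 biquad_nonneg[OF m2] by simp
  moreover have "\<forall>x y. biquad n k x y =
            (\<Sum>d=1..k. Fform n k d x y)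
            + (\<Sum>(i,j)\<in>{(i,j). 1 \<le> i \<and> i < j \<and> j \<le> n \<and> i mod k \<noteq> j mod k}.
                 (x i * y i - x j * y j)^2)"
    using part1[OF k n] by blast
  ultimately show ?thesis by blast
qed

end
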